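(* For $k\in\mathbb N=\{1,2,\dots\}$ and $0<\alpha<1$, \[ \sum_{j=0}^k \binom{\alpha k}{\alpha j} x^{\alpha j}y^{\alpha(k-j)}\ge (x+y)^{\alpha k},\qquad x,y\ge 0, \] and for $k\in\mathbb N$ and $\alpha>1$, \[ \sum_{j=0}^k \binom{\alpha k}{\alpha j} x^{\alpha j}y^{\alpha(k-j)}\le (x+y)^{\alpha k},\qquad x,y\ge 0. \] Both inequalities are strict whenever $x>0$ and $y>0$.
   Context: For real $a\ge b\ge 0$, the generalized binomial coefficient is $\binom{a}{b}=\frac{\Gamma(a+1)}{\Gamma(b+1)\Gamma(a-b+1)}$. *)

theory Defs
  imports "HOL-Analysis.Analysis"
begin

definition gen_binom :: "real \<Rightarrow> real \<Rightarrow> real" where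
  "gen_binom a b = Gamma (a + 1) / (Gamma (b + 1) * Gamma (a - b + 1))"

text \<open>Real power with the convention t^0 = 1 (Isabelle's powr has 0 powr 0 = 0).\<close>
definition rpow :: "real \<Rightarrow> real \<Rightarrow> real" where
  "rpow t a = (if a = 0 then 1 else t powr a)"

end

theory Submission
  imports Defs
begin


lemma affine_sub:
  fixes f :: "real \<Rightarrow> real"
  assumes "(f has_integral i) {a..b}" "m > 0"
  shows "((\<lambda>x. f (m*x + c)) has_integral i/m) {(a-c)/m..(b-c)/m}"
  using has_integral_affinity'[of f i a b m c] assms by (simp add: divide_inverse mult.commute)

lemma lemA:
  fixes p a x :: real
  assumes p: "p \<ge> 0" and a: "a > 0" and x: "x > 0"
  shows "((\<lambda>t. (1-t) powr (a-1) * (x*t) powr p) has_integral x powr p * Beta (p+1) a) {0..1}"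
proof -
  have "((\<lambda>t. x powr p * (t powr (p+1-1) * (1-t) powr (a-1))) has_integral x powr p * Beta (p+1) a) {0..1}"
    using has_integral_Beta_real[of "p+1" a] p a by (intro has_integral_mult_right) auto
  then show ?thesis
    by (rule has_integral_eq[rotated]) (simp add: powr_mult)
qed

lemma lemA':
  fixes p a x :: real
  assumes p: "p \<ge> 0" and a: "a > 0" and x: "x > 0"
  shows "x powr a / Gamma a * (x powr p * Beta (p+1) a) / Gamma (p+1) = x powr (p+a) / Gamma (p+a+1)"
proof -
  have "Gamma a > 0" "Gamma (p+1) > 0" "Gamma (p+a+1) > 0" using a p by (intro Gamma_real_pos; simp)+
  then show ?thesis by (simp add: Beta_def powr_add field_simps add_ac)
qed

lemma strict_int:
  fixes f g :: "real \<Rightarrow> real"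
  assumes r: "r > 0" and hf: "(f has_integral I) {0..r}" and hg: "(g has_integral J) {0..r}"
    and cf: "continuous_on {r/4..r/2} f" and cg: "continuous_on {r/4..r/2} g"
    and lt: "\<And>u. 0 < u \<Longrightarrow> u < r \<Longrightarrow> f u < g u"
  shows "I < J"
proof -
  have hd: "((\<lambda>u. g u - f u) has_integral (J - I)) {0<..<r}"
    using has_integral_diff[OF hg hf] by (simp add: has_integral_Icc_iff_Ioo)
  have cd: "continuous_on {r/4..r/2} (\<lambda>u. g u - f u)" using cf cg by (intro continuous_intros)
  then obtain W where hW: "((\<lambda>u. g u - f u) has_integral W) {r/4..r/2}"
    using integrable_continuous_real by blast
  have "W \<le> J - I"
    by (rule has_integral_subset_le[OF _ hW hd]) (use r lt in \<open>auto simp: less_imp_le\<close>)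
  moreover have "W \<ge> 0"
    by (rule has_integral_nonneg[OF hW]) (use r lt in \<open>auto simp: less_imp_le\<close>)
  moreover have "W \<noteq> 0"
  proof
    assume "W = 0"
    then have "g (r/3) - f (r/3) = 0"
      using has_integral_0_cbox_imp_0[of "r/4" "r/2" "\<lambda>u. g u - f u" "r/3"] cd hW r lt
      by (auto simp: less_imp_le)
    with lt[of "r/3"] r show False by auto
  qed
  ultimately show ?thesis by auto
qed

lemma aux1:
  fixes Lc Y X A T :: real
  shows "Lc \<noteq> 0 \<Longrightarrow> Y*X = 1 \<Longrightarrow> Lc * Y * ((A/Lc)*(X*T)) = T*A"
proof -
  assume "Lc \<noteq> 0" "Y*X = 1"
  then have "Lc * Y * ((A/Lc)*(X*T)) = (Y*X) * (T*A)" by (simp add: field_simps)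
  then show ?thesis using \<open>Y*X = 1\<close> by simp
qed

lemma aux2:
  fixes x L Lc Y Z xa La V2 :: real
  shows "x \<noteq> 0 \<Longrightarrow> L \<noteq> 0 \<Longrightarrow> Y*(L/x) = Z \<Longrightarrow> xa*Z = La \<Longrightarrow>
    xa * (Lc * Y * (V2/(x/L))) = Lc*La*V2"
proof -
  assume h: "x \<noteq> 0" "L \<noteq> 0" "Y*(L/x) = Z" "xa*Z = La"
  have e: "V2/(x/L) = V2*(L/x)" by simp
  have "xa * (Lc * Y * (V2/(x/L))) = Lc*V2*(xa*(Y*(L/x)))" unfolding e by (simp only: mult_ac)
  also have "\<dots> = Lc*V2*La" using h(3,4) by (simp only:)
  finally show ?thesis by (simp only: mult_ac)
qed

lemma aux3:
  fixes G iG B xV P V1 V2 Y U :: real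
  shows "G \<noteq> 0 \<Longrightarrow> iG = B/G \<Longrightarrow> xV = P*V2 \<Longrightarrow> Y = P*U \<Longrightarrow> V1+V2 = B \<Longrightarrow>
    xV/G + Y*iG - P*iG = P/G*(U*B - V1)"
proof -
  assume h: "G \<noteq> 0" "iG = B/G" "xV = P*V2" "Y = P*U" "V1+V2 = B"
  then have v: "V2 = B - V1" by simp
  have "P*(B-V1)/G + P*U*(B/G) - P*(B/G) = P/G*(U*B - V1)"
    using h(1) by (simp add: field_simps)
  then show ?thesis using h v by simp
qed

lemma lemB:
  fixes a c x y :: real
  assumes a: "a > 0" "a \<noteq> 1" and c: "c \<ge> 0" and x: "x > 0" and y: "y > 0"
  shows "\<exists>V. ((\<lambda>t. (1-t) powr (a-1) * (x*t+y) powr c) has_integral V) {0..1} \<and>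
     (a < 1 \<longrightarrow> (x+y) powr (c+a) / Gamma (c+a+1) < x powr a * V / (Gamma a * Gamma (c+1)) + y powr (c+a) / Gamma (c+a+1)) \<and>
     (a > 1 \<longrightarrow> (x+y) powr (c+a) / Gamma (c+a+1) > x powr a * V / (Gamma a * Gamma (c+1)) + y powr (c+a) / Gamma (c+a+1))"
proof -
  define L where "L = x + y"
  define u0 where "u0 = y / L"
  have L: "L > 0" using x y by (simp add: L_def)
  have u0: "0 < u0" "u0 < 1" using x y by (auto simp: u0_def L_def)
  define g where "g = (\<lambda>u::real. u powr c * (1-u) powr (a-1))"
  define B where "B = Beta (c+1) a"
  have hB: "(g has_integral B) {0..1}"
    using has_integral_Beta_real[of "c+1" a] a c by (simp add: g_def B_def)
  have gi: "g integrable_on {0..1}" using hB by blast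
  define V1 where "V1 = integral {0..u0} g"
  define V2 where "V2 = integral {u0..1} g"
  have h1: "(g has_integral V1) {0..u0}" unfolding V1_def
    by (rule integrable_integral, rule integrable_subinterval_real[OF gi]) (use u0 in auto)
  have h2: "(g has_integral V2) {u0..1}" unfolding V2_def
    by (rule integrable_integral, rule integrable_subinterval_real[OF gi]) (use u0 in auto)
  have V12: "V1 + V2 = B"
    using Henstock_Kurzweil_Integration.integral_combine[where a=0 and c=u0 and b=1 and f=g] gi u0 integral_unique[OF hB] by (simp add: V1_def V2_def)
  have xL: "x / L > 0" using x L by simp
  have e1: "(1 - u0) / (x / L) = 1" using x y L by (simp add: u0_def L_def field_simps)
  have hs: "((\<lambda>t. g (x / L * t + u0)) has_integral V2 / (x / L)) {0..1}"
  proof -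
    have hs0: "((\<lambda>t. g (x / L * t + u0)) has_integral V2 / (x / L)) {(u0-u0)/(x/L)..(1-u0)/(x/L)}"
      by (rule affine_sub[OF h2 xL])
    have ie: "{(u0-u0)/(x/L)..(1-u0)/(x/L)} = {0..1::real}" using e1 L u0 by simp
    show ?thesis using hs0[unfolded ie] .
  qed
  define V where "V = L powr c * (L/x) powr (a-1) * (V2 / (x / L))"
  have hV: "((\<lambda>t. (1-t) powr (a-1) * (x*t+y) powr c) has_integral V) {0..1}"
  proof -
    have "((\<lambda>t. L powr c * (L/x) powr (a-1) * g (x / L * t + u0)) has_integral V) {0..1}"
      unfolding V_def by (rule has_integral_mult_right[OF hs])
    moreover have "L powr c * (L/x) powr (a-1) * g (x / L * t + u0) = (1-t) powr (a-1) * (x*t+y) powr c"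
      if t: "t \<in> {0..1}" for t
    proof -
      have q1: "x / L * t + u0 = (x*t+y) / L" using L by (simp add: u0_def field_simps)
      have q2: "1 - (x*t+y)/L = (x/L) * (1-t)" using L by (simp add: L_def field_simps)
      have nn: "x*t+y \<ge> 0" "1 - t \<ge> 0" using t x y by auto
      have "g (x / L * t + u0) = ((x*t+y) powr c / L powr c) * ((x/L) powr (a-1) * (1-t) powr (a-1))"
        unfolding g_def q1 q2 using nn L x by (simp add: powr_divide powr_mult)
      moreover have yx: "(L/x) powr (a-1) * (x/L) powr (a-1) = 1"
        using L x by (simp add: powr_mult[symmetric])
      moreover have lc: "L powr c \<noteq> 0" using L by simp
      ultimately show ?thesis by (simp only: aux1[OF lc yx])
    qed
    ultimately show ?thesis by (rule has_integral_eq[rotated]) auto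
  qed
  have xV: "x powr a * V = L powr (c+a) * V2"
  proof -
    have "(L/x) powr (a-1) * (L/x) = (L/x) powr a"
      using L x by (simp add: powr_add[symmetric] powr_diff)
    moreover have "x powr a * (L/x) powr a = L powr a"
      using L x by (simp add: powr_mult[symmetric])
    moreover have "L powr (c+a) = L powr c * L powr a" by (simp add: powr_add)
    ultimately show ?thesis unfolding V_def using L x by (simp only: aux2)
  qed
  define h where "h = (\<lambda>u::real. u powr c * (u0-u) powr (a-1))"
  have hh: "(h has_integral u0 powr (c+a) * B) {0..u0}"
  proof -
    have iu: "1/u0 > 0" using u0 by simp
    have "((\<lambda>u. g (1/u0 * u + 0)) has_integral B / (1/u0)) {(0-0)/(1/u0)..(1-0)/(1/u0)}"
      by (rule affine_sub[OF hB iu])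
    then have "((\<lambda>u. u0 powr (c+a-1) * g (u / u0)) has_integral u0 powr (c+a-1) * (B * u0)) {0..u0}"
      by (intro has_integral_mult_right) simp
    moreover have "u0 powr (c+a-1) * g (u / u0) = h u" if u: "u \<in> {0..u0}" for u
    proof -
      have q: "1 - u/u0 = (u0-u)/u0" using u0 by (simp add: field_simps)
      have nn: "u \<ge> 0" "u0 - u \<ge> 0" using u by auto
      have "g (u/u0) = u powr c / u0 powr c * ((u0-u) powr (a-1) / u0 powr (a-1))"
        unfolding g_def q using nn u0 by (simp add: powr_divide)
      moreover have "u0 powr (c+a-1) = u0 powr c * u0 powr (a-1)"
        by (simp add: powr_add[symmetric] add_diff_eq)
      ultimately show ?thesis using u0 by (simp add: h_def field_simps)
    qed
    moreover have "u0 powr (c+a-1) * (B * u0) = u0 powr (c+a) * B"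
      using u0 by (simp add: powr_diff field_simps)
    ultimately show ?thesis by (metis (no_types, lifting) has_integral_eq)
  qed
  have cg: "continuous_on {u0/4..u0/2} g" using u0 unfolding g_def
    by (intro continuous_intros) auto
  have ch: "continuous_on {u0/4..u0/2} h" using u0 unfolding h_def
    by (intro continuous_intros) auto
  have pos: "Gamma a > 0" "Gamma (c+1) > 0" "Gamma (c+a+1) > 0" using a c
    by (intro Gamma_real_pos; simp)+
  have GB: "1 / Gamma (c+a+1) = B / (Gamma a * Gamma (c+1))"
    using pos by (simp add: B_def Beta_def add_ac)
  have yL: "y powr (c+a) = L powr (c+a) * u0 powr (c+a)"
    using L y by (simp add: u0_def powr_divide)
  define P where "P = L powr (c+a) / (Gamma a * Gamma (c+1))"
  have P: "P > 0" using L pos by (simp add: P_def)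
  have diff: "x powr a * V / (Gamma a * Gamma (c+1)) + y powr (c+a) / Gamma (c+a+1) - (x+y) powr (c+a) / Gamma (c+a+1)
     = P * (u0 powr (c+a) * B - V1)"
  proof -
    have G0: "Gamma a * Gamma (c+1) \<noteq> 0" using pos by simp
    have e1: "y powr (c+a) / Gamma (c+a+1) = y powr (c+a) * (1 / Gamma (c+a+1))" by simp
    have e2: "(x+y) powr (c+a) / Gamma (c+a+1) = L powr (c+a) * (1 / Gamma (c+a+1))"
      by (simp add: L_def)
    show ?thesis unfolding e1 e2 P_def
      by (rule aux3[OF G0 GB xV yL V12])
  qed
  show ?thesis
  proof (intro exI conjI impI)
    show "((\<lambda>t. (1-t) powr (a-1) * (x*t+y) powr c) has_integral V) {0..1}" by (rule hV)
  next
    assume a1: "a < 1"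
    have "V1 < u0 powr (c+a) * B"
    proof (rule strict_int[OF u0(1) h1 hh cg ch])
      fix u assume "0 < u" "u < u0"
      then have "(1-u) powr (a-1) < (u0-u) powr (a-1)"
        using a1 u0 by (intro powr_less_mono2_neg) auto
      then show "g u < h u" using \<open>0 < u\<close> unfolding g_def h_def by simp
    qed
    then show "(x+y) powr (c+a) / Gamma (c+a+1) < x powr a * V / (Gamma a * Gamma (c+1)) + y powr (c+a) / Gamma (c+a+1)"
      using diff P mult_pos_pos[of P "u0 powr (c+a) * B - V1"] by linarith
  next
    assume a1: "a > 1"
    have "u0 powr (c+a) * B < V1"
    proof (rule strict_int[OF u0(1) hh h1 ch cg])
      fix u assume "0 < u" "u < u0"
      then have "(u0-u) powr (a-1) < (1-u) powr (a-1)"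
        using a1 u0 by (intro powr_less_mono2) auto
      then show "h u < g u" using \<open>0 < u\<close> unfolding g_def h_def by simp
    qed
    then show "(x+y) powr (c+a) / Gamma (c+a+1) > x powr a * V / (Gamma a * Gamma (c+1)) + y powr (c+a) / Gamma (c+a+1)"
      using diff P mult_pos_neg[of P "u0 powr (c+a) * B - V1"] by linarith
  qed
qed


definition Fk :: "real \<Rightarrow> real \<Rightarrow> nat \<Rightarrow> real \<Rightarrow> real" where
  "Fk a y k x = (\<Sum>j=0..k. x powr (a * real j) * y powr (a * real (k-j)) /
      (Gamma (a * real j + 1) * Gamma (a * real (k-j) + 1)))"

definition Hk :: "real \<Rightarrow> real \<Rightarrow> nat \<Rightarrow> real \<Rightarrow> real" where
  "Hk a y k x = (x+y) powr (a * real k) / Gamma (a * real k + 1)"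

lemma lemF:
  fixes a y x :: real
  assumes a: "a > 0" and y: "y > 0" and x: "x > 0"
  shows "\<exists>S. ((\<lambda>t. (1-t) powr (a-1) * Fk a y k (x*t)) has_integral S) {0..1} \<and>
     x powr a / Gamma a * S = Fk a y (Suc k) x - y powr (a * real (Suc k)) / Gamma (a * real (Suc k) + 1)"
proof -
  define cj where "cj j = y powr (a * real (k-j)) / (Gamma (a * real j + 1) * Gamma (a * real (k-j) + 1))" for j
  define S where "S = (\<Sum>j=0..k. cj j * (x powr (a * real j) * Beta (a * real j + 1) a))"
  have hs: "((\<lambda>t. \<Sum>j=0..k. cj j * ((1-t) powr (a-1) * (x*t) powr (a * real j))) has_integral S) {0..1}"
    unfolding S_def
    by (intro has_integral_sum finite_atLeastAtMost ballI has_integral_mult_right lemA) (use a x in auto)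
  have hi: "((\<lambda>t. (1-t) powr (a-1) * Fk a y k (x*t)) has_integral S) {0..1}"
  proof (rule has_integral_eq[rotated, OF hs])
    fix t :: real
    show "(\<Sum>j=0..k. cj j * ((1-t) powr (a-1) * (x*t) powr (a * real j))) = (1-t) powr (a-1) * Fk a y k (x*t)"
      unfolding Fk_def sum_distrib_left cj_def by (intro sum.cong refl) (simp add: field_simps)
  qed
  have tm: "x powr a / Gamma a * (cj j * (x powr (a * real j) * Beta (a * real j + 1) a))
     = x powr (a * real (Suc j)) * y powr (a * real (k-j)) / (Gamma (a * real (Suc j) + 1) * Gamma (a * real (k-j) + 1))"
    for j
  proof -
    have "x powr a / Gamma a * (x powr (a * real j) * Beta (a * real j + 1) a) / Gamma (a * real j + 1)
        = x powr (a * real j + a) / Gamma (a * real j + a + 1)"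
      by (rule lemA') (use a x in auto)
    moreover have "a * real (Suc j) = a * real j + a" by (simp add: algebra_simps)
    ultimately have e: "x powr a / Gamma a * (x powr (a * real j) * Beta (a * real j + 1) a) / Gamma (a * real j + 1)
        = x powr (a * real (Suc j)) / Gamma (a * real (Suc j) + 1)" by (simp add: add_ac)
    have p: "0 < a * real j + 1" using a
      by (metis add_nonneg_pos zero_less_one mult_nonneg_nonneg of_nat_0_le_iff less_imp_le)
    have gj: "Gamma (a * real j + 1) \<noteq> 0" using Gamma_real_pos[OF p] by simp
    have "x powr a / Gamma a * (cj j * (x powr (a * real j) * Beta (a * real j + 1) a))
      = (x powr a / Gamma a * (x powr (a * real j) * Beta (a * real j + 1) a) / Gamma (a * real j + 1))
        * (y powr (a * real (k-j)) / Gamma (a * real (k-j) + 1))"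
      unfolding cj_def using gj by (simp add: field_simps)
    then show ?thesis unfolding e by simp
  qed
  have "x powr a / Gamma a * S = (\<Sum>j=0..k. x powr (a * real (Suc j)) * y powr (a * real (k-j)) / (Gamma (a * real (Suc j) + 1) * Gamma (a * real (k-j) + 1)))"
    unfolding S_def sum_distrib_left by (intro sum.cong refl tm)
  also have "\<dots> = Fk a y (Suc k) x - y powr (a * real (Suc k)) / Gamma (a * real (Suc k) + 1)"
    unfolding Fk_def by (subst sum.atLeast0_atMost_Suc_shift) (use x in simp)
  finally show ?thesis using hi by blast
qed

lemma lemInd:
  fixes a y :: real
  assumes a: "a > 0" "a \<noteq> 1" and y: "y > 0"
  shows "\<forall>x>0. 0 \<le> (if a < 1 then 1 else -1) * (Fk a y k x - Hk a y k x) \<and>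
           (k \<ge> 1 \<longrightarrow> 0 < (if a < 1 then 1 else -1) * (Fk a y k x - Hk a y k x))"
proof (induction k)
  case 0
  show ?case using y by (auto simp: Fk_def Hk_def)
next
  case (Suc k)
  define s :: real where "s = (if a < 1 then 1 else -1)"
  note IH = Suc[folded s_def]
  show ?case unfolding s_def[symmetric]
  proof (intro allI impI conjI)
    fix x :: real assume x: "x > 0"
    define c where "c = a * real k"
    have c: "c \<ge> 0" using a by (simp add: c_def)
    obtain S where hS: "((\<lambda>t. (1-t) powr (a-1) * Fk a y k (x*t)) has_integral S) {0..1}"
      and vS: "x powr a / Gamma a * S = Fk a y (Suc k) x - y powr (a * real (Suc k)) / Gamma (a * real (Suc k) + 1)"
      using lemF[OF a(1) y x, of k] by blast
    obtain V where hV: "((\<lambda>t. (1-t) powr (a-1) * (x*t+y) powr c) has_integral V) {0..1}"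
      and lt1: "a < 1 \<longrightarrow> (x+y) powr (c+a) / Gamma (c+a+1) < x powr a * V / (Gamma a * Gamma (c+1)) + y powr (c+a) / Gamma (c+a+1)"
      and lt2: "a > 1 \<longrightarrow> (x+y) powr (c+a) / Gamma (c+a+1) > x powr a * V / (Gamma a * Gamma (c+1)) + y powr (c+a) / Gamma (c+a+1)"
      using lemB[OF a c x y] by blast
    have hV': "((\<lambda>t. (1-t) powr (a-1) * Hk a y k (x*t)) has_integral V / Gamma (c+1)) {0..1}"
    proof -
      have "((\<lambda>t. (1 / Gamma (c+1)) * ((1-t) powr (a-1) * (x*t+y) powr c)) has_integral (1 / Gamma (c+1)) * V) {0..1}"
        by (rule has_integral_mult_right[OF hV])
      moreover have e: "(1 / Gamma (c+1)) * V = V / Gamma (c+1)" by simp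
      ultimately have h0: "((\<lambda>t. (1 / Gamma (c+1)) * ((1-t) powr (a-1) * (x*t+y) powr c)) has_integral V / Gamma (c+1)) {0..1}"
        by simp
      show ?thesis by (rule has_integral_eq[rotated, OF h0]) (auto simp: Hk_def c_def)
    qed
    have hE: "((\<lambda>t. s * ((1-t) powr (a-1) * Fk a y k (x*t) - (1-t) powr (a-1) * Hk a y k (x*t))) has_integral
        s * (S - V / Gamma (c+1))) {0..1}"
      by (intro has_integral_mult_right has_integral_diff hS hV')
    have nn: "0 \<le> s * (S - V / Gamma (c+1))"
    proof (rule has_integral_nonneg)
      show "((\<lambda>t. s * ((1-t) powr (a-1) * Fk a y k (x*t) - (1-t) powr (a-1) * Hk a y k (x*t))) has_integral
        s * (S - V / Gamma (c+1))) {0<..<1}" using hE by (simp add: has_integral_Icc_iff_Ioo)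
    next
      fix t :: real assume t: "t \<in> {0<..<1}"
      then have "x * t > 0" using x by simp
      then have "0 \<le> s * (Fk a y k (x*t) - Hk a y k (x*t))" using IH by blast
      moreover have "(1-t) powr (a-1) > 0" using t by simp
      ultimately have "0 \<le> (1-t) powr (a-1) * (s * (Fk a y k (x*t) - Hk a y k (x*t)))" by simp
      then show "0 \<le> s * ((1-t) powr (a-1) * Fk a y k (x*t) - (1-t) powr (a-1) * Hk a y k (x*t))"
        by (simp add: algebra_simps)
    qed
    have ca: "a * real (Suc k) = c + a" by (simp add: c_def algebra_simps)
    have HS: "Hk a y (Suc k) x = (x+y) powr (c+a) / Gamma (c+a+1)" unfolding Hk_def ca by (rule refl)
    have FS: "Fk a y (Suc k) x = x powr a / Gamma a * S + y powr (c+a) / Gamma (c+a+1)"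
      using vS unfolding ca by (simp add: algebra_simps)
    define D where "D = x powr a * V / (Gamma a * Gamma (c+1)) + y powr (c+a) / Gamma (c+a+1) - (x+y) powr (c+a) / Gamma (c+a+1)"
    have Dpos: "0 < s * D" using lt1 lt2 a unfolding s_def D_def by auto
    have xa: "x powr a / Gamma a > 0" using x a by simp
    have g1: "Gamma a \<noteq> 0" using a by (simp add: Gamma_real_pos less_imp_neq[symmetric])
    have "c + 1 > 0" using c by simp
    from Gamma_real_pos[OF this] have g2: "Gamma (c+1) \<noteq> 0" by simp
    have "s * (Fk a y (Suc k) x - Hk a y (Suc k) x) = (x powr a / Gamma a) * (s * (S - V / Gamma (c+1))) + s * D"
      unfolding FS HS D_def using g1 g2 by (simp add: field_simps)
    moreover have "0 \<le> (x powr a / Gamma a) * (s * (S - V / Gamma (c+1)))"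
      using mult_nonneg_nonneg[OF less_imp_le[OF xa] nn] .
    ultimately have "0 < s * (Fk a y (Suc k) x - Hk a y (Suc k) x)" using Dpos by linarith
    then show "0 \<le> s * (Fk a y (Suc k) x - Hk a y (Suc k) x)" "0 < s * (Fk a y (Suc k) x - Hk a y (Suc k) x)"
      by auto
  qed
qed


lemma Gpos_k:
  fixes a :: real
  assumes "a > 0" shows "Gamma (a * real k + 1) > 0"
proof -
  have "0 < a * real k + 1" using assms
    by (metis add_nonneg_pos zero_less_one mult_nonneg_nonneg of_nat_0_le_iff less_imp_le)
  then show ?thesis by (rule Gamma_real_pos)
qed

theorem theorem1p3:
  fixes k :: nat and \<alpha> x y :: real
  assumes "k \<ge> 1" and "x \<ge> 0" and "y \<ge> 0"
  shows "(0 < \<alpha> \<and> \<alpha> < 1 \<longrightarrow>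
           (\<Sum>j=0..k. gen_binom (\<alpha> * k) (\<alpha> * j) * rpow x (\<alpha> * j) * rpow y (\<alpha> * (k - j)))
             \<ge> rpow (x + y) (\<alpha> * k))
       \<and> (0 < \<alpha> \<and> \<alpha> < 1 \<and> x > 0 \<and> y > 0 \<longrightarrow>
           (\<Sum>j=0..k. gen_binom (\<alpha> * k) (\<alpha> * j) * rpow x (\<alpha> * j) * rpow y (\<alpha> * (k - j)))
             > rpow (x + y) (\<alpha> * k))
       \<and> (\<alpha> > 1 \<longrightarrow>
           (\<Sum>j=0..k. gen_binom (\<alpha> * k) (\<alpha> * j) * rpow x (\<alpha> * j) * rpow y (\<alpha> * (k - j)))
             \<le> rpow (x + y) (\<alpha> * k))
       \<and> (\<alpha> > 1 \<and> x > 0 \<and> y > 0 \<longrightarrow>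
           (\<Sum>j=0..k. gen_binom (\<alpha> * k) (\<alpha> * j) * rpow x (\<alpha> * j) * rpow y (\<alpha> * (k - j)))
             < rpow (x + y) (\<alpha> * k))"
  proof -
  define Sm where "Sm = (\<Sum>j=0..k. gen_binom (\<alpha> * k) (\<alpha> * j) * rpow x (\<alpha> * j) * rpow y (\<alpha> * (k - j)))"
  have kpos: "real k > 0" using assms(1) by simp
  have pos_case: "Sm = Gamma (\<alpha> * k + 1) * Fk \<alpha> y k x \<and> rpow (x + y) (\<alpha> * k) = Gamma (\<alpha> * k + 1) * Hk \<alpha> y k x"
    if ap: "\<alpha> > 0" and xp: "x > 0" and yp: "y > 0"
  proof
    show "rpow (x + y) (\<alpha> * k) = Gamma (\<alpha> * k + 1) * Hk \<alpha> y k x"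
    proof -
      have "Gamma (\<alpha> * k + 1) > 0" using ap by (rule Gpos_k)
      then show ?thesis using ap kpos by (simp add: rpow_def Hk_def)
    qed
    show "Sm = Gamma (\<alpha> * k + 1) * Fk \<alpha> y k x"
      unfolding Sm_def Fk_def sum_distrib_left
    proof (intro sum.cong refl)
      fix j assume j: "j \<in> {0..k}"
      have d: "\<alpha> * real k - \<alpha> * real j = \<alpha> * real (k - j)" using j by (simp add: of_nat_diff algebra_simps)
      have r1: "rpow x (\<alpha> * real j) = x powr (\<alpha> * real j)" using xp by (simp add: rpow_def)
      have r2: "rpow y (\<alpha> * real (k - j)) = y powr (\<alpha> * real (k - j))" using yp by (simp add: rpow_def)
      show "gen_binom (\<alpha> * k) (\<alpha> * j) * rpow x (\<alpha> * j) * rpow y (\<alpha> * (k - j)) =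
        Gamma (\<alpha> * k + 1) * (x powr (\<alpha> * real j) * y powr (\<alpha> * real (k - j)) /
          (Gamma (\<alpha> * real j + 1) * Gamma (\<alpha> * real (k - j) + 1)))"
        unfolding gen_binom_def d r1 r2 by simp
    qed
  qed
  have bd: "Sm = rpow (x + y) (\<alpha> * k)" if ap: "\<alpha> > 0" and xy: "x = 0 \<or> y = 0"
  proof (cases "x = 0")
    case True
    have "Sm = (\<Sum>j\<in>{0}. gen_binom (\<alpha> * k) (\<alpha> * j) * rpow x (\<alpha> * j) * rpow y (\<alpha> * (k - j)))"
      unfolding Sm_def using True ap by (intro sum.mono_neutral_right) (auto simp: rpow_def)
    also have "\<dots> = rpow (x + y) (\<alpha> * k)"
    proof -
      have "Gamma (\<alpha> * k + 1) > 0" using ap by (rule Gpos_k)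
      then show ?thesis using True by (simp add: gen_binom_def rpow_def)
    qed
    finally show ?thesis .
  next
    case False
    then have y0: "y = 0" and xp: "x > 0" using xy assms(2) by auto
    have "Sm = (\<Sum>j\<in>{k}. gen_binom (\<alpha> * k) (\<alpha> * j) * rpow x (\<alpha> * j) * rpow y (\<alpha> * (k - j)))"
      unfolding Sm_def using y0 ap by (intro sum.mono_neutral_right) (auto simp: rpow_def)
    also have "\<dots> = rpow (x + y) (\<alpha> * k)"
    proof -
      have "Gamma (\<alpha> * k + 1) > 0" using ap by (rule Gpos_k)
      then show ?thesis using y0 by (simp add: gen_binom_def rpow_def)
    qed
    finally show ?thesis .
  qed
  have G: "Gamma (\<alpha> * k + 1) > 0" if "\<alpha> > 0" using that by (rule Gpos_k)
  have lt: "Sm > rpow (x + y) (\<alpha> * k)" if "0 < \<alpha>" "\<alpha> < 1" "x > 0" "y > 0"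
  proof -
    have "0 < (if \<alpha> < 1 then 1 else -1) * (Fk \<alpha> y k x - Hk \<alpha> y k x)"
      using lemInd[of \<alpha> y k] that assms(1) by auto
    then have "Hk \<alpha> y k x < Fk \<alpha> y k x" using that by simp
    then show ?thesis using pos_case[OF that(1,3,4)] G[OF that(1)] by simp
  qed
  have gt: "Sm < rpow (x + y) (\<alpha> * k)" if "1 < \<alpha>" "x > 0" "y > 0"
  proof -
    have "0 < (if \<alpha> < 1 then 1 else -1) * (Fk \<alpha> y k x - Hk \<alpha> y k x)"
      using lemInd[of \<alpha> y k] that assms(1) by auto
    then have "Fk \<alpha> y k x < Hk \<alpha> y k x" using that by simp
    then show ?thesis using pos_case[of] that G[of] by simp
  qed
  show ?thesis unfolding Sm_def[symmetric]
    using lt gt bd assms(2,3) by (smt (verit))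
qed

end
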